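(* Let $(x_t)$ be a real-valued stationary time series admitting a weak innovations representation: causal maps $G,H$ with $\nu_t=G(x_t,x_{t-1},\dots)$, $\hat x_t=H(\nu_t,\nu_{t-1},\dots)$, $(\nu_t)$ i.i.d. $\mathcal U[0,1]$, and $(\hat x_t)\stackrel{d}{=}(x_t)$ (equality of all finite-dimensional joint distributions). Assume the decoder $H$ is injective. Define the conditional distribution functions $$F(x\mid a_{t-1},a_{t-2},\dots)=\mathbb{P}[x_t\le x\mid x_{t-1}=a_{t-1},x_{t-2}=a_{t-2},\dots],$$ $$\hat F(x\mid b_{t-1},b_{t-2},\dots)=\mathbb{P}[\hat x_t\le x\mid \nu_{t-1}=b_{t-1},\nu_{t-2}=b_{t-2},\dots].$$ Then $F(x\mid a_{t-1},a_{t-2},\dots)=\hat F(x\mid b_{t-1},b_{t-2},\dots)$, as functions of $x$, almost everywhere, for almost all $a_{t-1},a_{t-2},\dots$, where $b_s=H^{-1}(a_s,a_{s-1},\dots)$, i.e. $(b_s)$ is the (unique, by injectivity of $H$) sequence with $a_s=H(b_s,b_{s-1},\dots)$ for all $s\le t-1$.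
   Context: The weak innovations representation relaxes the Wiener–Kallianpur innovations representation by requiring only that the decoder output $(\hat x_t)$ have the same distribution as $(x_t)$, rather than equal $(x_t)$. *)

theory Defs
  imports "HOL-Probability.Probability"
begin

text \<open>Space of one-sided sequences (s_0, s_1, ...) of reals, index k = lag k.\<close>
definition seqspace :: "(nat \<Rightarrow> real) measure" where
  "seqspace = PiM UNIV (\<lambda>_. borel)"

definition hist :: "(int \<Rightarrow> 'a \<Rightarrow> real) \<Rightarrow> int \<Rightarrow> 'a \<Rightarrow> nat \<Rightarrow> real" where
  "hist z t \<omega> = (\<lambda>k. z (t - int k) \<omega>)"

definition past :: "(int \<Rightarrow> 'a \<Rightarrow> real) \<Rightarrow> int \<Rightarrow> 'a \<Rightarrow> nat \<Rightarrow> real" where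
  "past z t \<omega> = (\<lambda>k. z (t - 1 - int k) \<omega>)"

definition same_fdd :: "'a measure \<Rightarrow> (int \<Rightarrow> 'a \<Rightarrow> real) \<Rightarrow> (int \<Rightarrow> 'a \<Rightarrow> real) \<Rightarrow> bool" where
  "same_fdd M z w \<longleftrightarrow> (\<forall>J. finite J \<longrightarrow>
     distr M (PiM J (\<lambda>_. borel)) (\<lambda>\<omega>. restrict (\<lambda>j. z j \<omega>) J) =
     distr M (PiM J (\<lambda>_. borel)) (\<lambda>\<omega>. restrict (\<lambda>j. w j \<omega>) J))"

definition stationary :: "'a measure \<Rightarrow> (int \<Rightarrow> 'a \<Rightarrow> real) \<Rightarrow> bool" where
  "stationary M z \<longleftrightarrow> (\<forall>h. same_fdd M (\<lambda>j. z (j + h)) z)"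

text \<open>Fc is a (jointly measurable) version of the conditional distribution function
  Fc r (a_{t-1}, a_{t-2}, ...) = P[z_t \<le> r | y_{t-1} = a_{t-1}, y_{t-2} = a_{t-2}, ...].\<close>
definition cond_cdf :: "'a measure \<Rightarrow> (int \<Rightarrow> 'a \<Rightarrow> real) \<Rightarrow> (int \<Rightarrow> 'a \<Rightarrow> real) \<Rightarrow> int
    \<Rightarrow> (real \<Rightarrow> (nat \<Rightarrow> real) \<Rightarrow> real) \<Rightarrow> bool" where
  "cond_cdf M z y t Fc \<longleftrightarrow>
     (\<lambda>(r, a). Fc r a) \<in> borel_measurable (borel \<Otimes>\<^sub>M seqspace) \<and>
     (\<forall>r. AE \<omega> in M. Fc r (past y t \<omega>) =
        real_cond_exp M (vimage_algebra (space M) (past y t) seqspace)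
          (\<lambda>\<omega>. indicator {\<omega>' \<in> space M. z t \<omega>' \<le> r} \<omega>) \<omega>)"

definition dec_inv :: "((nat \<Rightarrow> real) \<Rightarrow> real) \<Rightarrow> (nat \<Rightarrow> real) \<Rightarrow> nat \<Rightarrow> real" where
  "dec_inv H a = (THE b. (\<forall>k. b k \<in> {0..1}) \<and> (\<forall>k. a k = H (\<lambda>j. b (k + j))))"

end

theory Submission
  imports Defs
begin


definition Phi :: "((nat \<Rightarrow> real) \<Rightarrow> real) \<Rightarrow> (nat \<Rightarrow> real) \<Rightarrow> nat \<Rightarrow> real" where
  "Phi H b = (\<lambda>k. H (\<lambda>j. b (k + j)))"

definition KK :: "(nat \<Rightarrow> real) set" where
  "KK = {b. \<forall>k. b k \<in> {0..1}}"

lemma dec_inv_Phi: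
  assumes "inj_on H KK" "b \<in> KK"
  shows "dec_inv H (Phi H b) = b"
  unfolding dec_inv_def
proof (rule the_equality)
  show "(\<forall>k. b k \<in> {0..1}) \<and> (\<forall>k. Phi H b k = H (\<lambda>j. b (k + j)))"
    using assms(2) by (simp add: KK_def Phi_def)
next
  fix b' assume b': "(\<forall>k. b' k \<in> {0..1}) \<and> (\<forall>k. Phi H b k = H (\<lambda>j. b' (k + j)))"
  have "Phi H b 0 = H (\<lambda>j. b' (0 + j))" using b' by blast
  then have "H b' = H b" by (simp add: Phi_def)
  moreover have "b' \<in> KK" using b' by (simp add: KK_def)
  ultimately show "b' = b" using assms inj_onD by metis
qed

lemma sets_seqspace: "sets seqspace = sets (borel :: (nat \<Rightarrow> real) measure)"
  unfolding seqspace_def by (rule sets_PiM_equal_borel)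

lemma space_seqspace[simp]: "space seqspace = UNIV"
  unfolding seqspace_def by (simp add: space_PiM)

lemma measurable_shift[measurable]: "(\<lambda>b. (\<lambda>j. b (k + j))) \<in> seqspace \<rightarrow>\<^sub>M seqspace"
  unfolding seqspace_def by (intro measurable_PiM_single') auto

lemma measurable_Phi[measurable]:
  assumes [measurable]: "H \<in> borel_measurable seqspace"
  shows "Phi H \<in> seqspace \<rightarrow>\<^sub>M seqspace"
proof -
  have "(\<lambda>b. H (\<lambda>j. b (k + j))) \<in> borel_measurable seqspace" for k by measurable
  then show ?thesis unfolding Phi_def seqspace_def
    by (intro measurable_PiM_single') (auto simp: seqspace_def)
qed

lemma KK_sets[measurable]: "KK \<in> sets seqspace"
proof -
  have "KK = (\<Inter>k. {b\<in>space seqspace. b k \<in> {0..1}})" by (auto simp: KK_def)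
  also have "\<dots> \<in> sets seqspace" unfolding seqspace_def by measurable
  finally show ?thesis .
qed



lemma sets_seqprod: "sets (seqspace \<Otimes>\<^sub>M seqspace) = sets (borel :: ((nat \<Rightarrow> real) \<times> (nat \<Rightarrow> real)) measure)"
proof -
  have "sets (seqspace \<Otimes>\<^sub>M seqspace) = sets ((borel :: (nat \<Rightarrow> real) measure) \<Otimes>\<^sub>M (borel :: (nat \<Rightarrow> real) measure))"
    by (rule sets_pair_measure_cong[OF sets_seqspace sets_seqspace])
  also have "((borel :: (nat \<Rightarrow> real) measure) \<Otimes>\<^sub>M (borel :: (nat \<Rightarrow> real) measure)) = borel" by (rule borel_prod)
  finally show ?thesis .
qed

lemma exists_inverse:
  assumes P: "prob_space M" and NP[measurable]: "NP \<in> M \<rightarrow>\<^sub>M seqspace"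
    and H[measurable]: "H \<in> borel_measurable seqspace" and inj: "inj_on H KK"
    and AEK: "AE \<omega> in M. NP \<omega> \<in> KK"
  obtains g S where "g \<in> seqspace \<rightarrow>\<^sub>M seqspace" "S \<in> sets seqspace"
    "\<forall>a\<in>S. g a = dec_inv H a" "AE \<omega> in M. Phi H (NP \<omega>) \<in> S"
proof -
  interpret prob_space M by (rule P)
  define \<Gamma> where "\<Gamma> = {p :: (nat\<Rightarrow>real)\<times>(nat\<Rightarrow>real). snd p \<in> KK \<and> fst p = Phi H (snd p)}"
  have "\<Gamma> = {p\<in>space (seqspace \<Otimes>\<^sub>M seqspace). snd p \<in> KK} \<inter>
     {p\<in>space (seqspace \<Otimes>\<^sub>M seqspace). \<forall>k. fst p k = Phi H (snd p) k}"
    by (auto simp: \<Gamma>_def space_pair_measure fun_eq_iff)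
  also have "\<dots> \<in> sets (seqspace \<Otimes>\<^sub>M seqspace)"
  proof -
    have [measurable]: "(\<lambda>b. b k) \<in> borel_measurable seqspace" for k
      unfolding seqspace_def by simp
    have m1: "(\<lambda>p. fst p k) \<in> borel_measurable (seqspace \<Otimes>\<^sub>M seqspace)" for k
      by (rule measurable_compose[OF measurable_fst]) simp
    have m2: "(\<lambda>p. Phi H (snd p) k) \<in> borel_measurable (seqspace \<Otimes>\<^sub>M seqspace)" for k
      unfolding Phi_def
      by (rule measurable_compose[OF measurable_compose[OF measurable_snd measurable_shift] H])
    have e: "{p\<in>space (seqspace \<Otimes>\<^sub>M seqspace). \<forall>k. fst p k = Phi H (snd p) k} =
      (\<Inter>k. {p\<in>space (seqspace \<Otimes>\<^sub>M seqspace). fst p k = Phi H (snd p) k})" by auto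
    have "{p\<in>space (seqspace \<Otimes>\<^sub>M seqspace). snd p \<in> KK} \<in> sets (seqspace \<Otimes>\<^sub>M seqspace)"
      using measurable_sets[OF measurable_snd[of seqspace seqspace] KK_sets] by (simp add: Int_def space_pair_measure conj_commute vimage_def)
    moreover have "{p\<in>space (seqspace \<Otimes>\<^sub>M seqspace). \<forall>k. fst p k = Phi H (snd p) k} \<in> sets (seqspace \<Otimes>\<^sub>M seqspace)"
      unfolding e using measurable_equality_set[OF m1 m2] by blast
    ultimately show ?thesis by blast
  qed
  finally have \<Gamma>_sets: "\<Gamma> \<in> sets borel" using sets_seqprod by simp
  define pr where "pr \<omega> = (Phi H (NP \<omega>), NP \<omega>)" for \<omega>
  have "pr \<in> M \<rightarrow>\<^sub>M seqspace \<Otimes>\<^sub>M seqspace" unfolding pr_def by measurable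
  then have pr_meas: "pr \<in> M \<rightarrow>\<^sub>M borel" using measurable_cong_sets[OF refl sets_seqprod] by blast
  define \<rho> where "\<rho> = distr M borel pr"
  interpret R: prob_space \<rho> unfolding \<rho>_def by (rule prob_space_distr[OF pr_meas])
  have sets_\<rho>: "sets \<rho> = sets borel" by (simp add: \<rho>_def)
  have "AE \<omega> in M. pr \<omega> \<in> \<Gamma>" using AEK by eventually_elim (simp add: pr_def \<Gamma>_def)
  then have "AE p in \<rho>. p \<in> \<Gamma>" unfolding \<rho>_def
    using AE_distr_iff[OF pr_meas, of "\<lambda>p. p \<in> \<Gamma>"] \<Gamma>_sets by simp
  then have "R.prob \<Gamma> = 1" using R.AE_in_set_eq_1 \<Gamma>_sets sets_\<rho> by auto
  then have em1: "emeasure \<rho> \<Gamma> = 1" using R.emeasure_eq_measure by simp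
  have inner: "emeasure \<rho> \<Gamma> = (SUP K \<in> {K. K \<subseteq> \<Gamma> \<and> compact K}. emeasure \<rho> K)"
    by (rule inner_regular[OF sets_\<rho> _ \<Gamma>_sets]) simp
  have "\<exists>K. K \<subseteq> \<Gamma> \<and> compact K \<and> 1 - 1 / real (Suc n) < R.prob K" for n
  proof -
    have "ennreal (1 - 1 / real (Suc n)) < 1"
      by (simp add: ennreal_lessI)
    then have "ennreal (1 - 1 / real (Suc n)) < (SUP K \<in> {K. K \<subseteq> \<Gamma> \<and> compact K}. emeasure \<rho> K)"
      using inner em1 by simp
    then obtain K where K: "K \<subseteq> \<Gamma>" "compact K" "ennreal (1 - 1 / real (Suc n)) < emeasure \<rho> K"
      by (auto simp: less_SUP_iff)
    then have "1 - 1 / real (Suc n) < R.prob K"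
      using R.emeasure_eq_measure by (simp add: ennreal_less_iff)
    with K show ?thesis by blast
  qed
  then obtain L where L: "\<And>n. L n \<subseteq> \<Gamma>" "\<And>n. compact (L n)" "\<And>n. 1 - 1 / real (Suc n) < R.prob (L n)"
    by metis
  have L_sets: "L n \<in> sets \<rho>" for n using L(2) sets_\<rho> by (simp add: compact_imp_closed)
  define U where "U = (\<Union>n. L n)"
  have U_sets: "U \<in> sets \<rho>" unfolding U_def using L_sets by blast
  have "R.prob U = 1"
  proof (rule ccontr)
    assume "R.prob U \<noteq> 1"
    then have "R.prob U < 1" using R.prob_le_1 by (simp add: order_less_le)
    then obtain n where n: "inverse (real (Suc n)) < 1 - R.prob U"
      using reals_Archimedean[of "1 - R.prob U"] by auto
    have "R.prob (L n) \<le> R.prob U" using U_sets by (auto simp: U_def intro!: R.finite_measure_mono)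
    then have "(1 + real n) * R.prob (L n) \<le> (1 + real n) * R.prob U" by (intro mult_left_mono) auto
    with L(3)[of n] n show False by (simp add: field_simps)
  qed
  then have "AE p in \<rho>. p \<in> U" using R.AE_in_set_eq_1 U_sets by auto
  then have AEU: "AE \<omega> in M. pr \<omega> \<in> U" unfolding \<rho>_def
    using AE_distr_iff[OF pr_meas, of "\<lambda>p. p \<in> U"] U_sets sets_\<rho> by (simp add: \<rho>_def)
  define L' where "L' n = (\<Union>m\<le>n. L m)" for n
  have L'c: "compact (L' n)" for n unfolding L'_def using L(2) by (intro compact_UN) auto
  have L'G: "L' n \<subseteq> \<Gamma>" for n unfolding L'_def using L(1) by blast
  define T where "T n = fst ` L' n" for n
  have Tc: "compact (T n)" for n unfolding T_def
    by (intro compact_continuous_image L'c continuous_intros)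
  have Tb: "T n \<in> sets borel" for n using Tc by (simp add: compact_imp_closed)
  have Tmono: "m \<le> n \<Longrightarrow> T m \<subseteq> T n" for m n unfolding T_def L'_def by (intro image_mono) (auto intro: order_trans)
  have cont: "continuous_on (T n) (dec_inv H)" for n
  proof -
    have "\<forall>p\<in>L' n. (fst p, dec_inv H (fst p)) = p"
    proof
      fix p assume "p \<in> L' n"
      then have "p \<in> \<Gamma>" using L'G by blast
      then show "(fst p, dec_inv H (fst p)) = p"
        unfolding \<Gamma>_def using dec_inv_Phi[OF inj] by (cases p) auto
    qed
    then have "continuous_on (fst ` L' n) (\<lambda>a. (a, dec_inv H a))"
      by (intro continuous_on_inv L'c continuous_intros)
    then have "continuous_on (fst ` L' n) (\<lambda>a. snd (a, dec_inv H a))"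
      by (rule continuous_on_snd)
    then show ?thesis by (simp add: T_def)
  qed
  define S where "S = (\<Union>n. T n)"
  define g where "g a = (if a \<in> S then dec_inv H a else (\<lambda>_. 0))" for a
  define h where "h n a = (if a \<in> T n then dec_inv H a else (\<lambda>_::nat. 0::real))" for n a
  have hm: "h n \<in> borel_measurable borel" for n
    unfolding h_def by (rule borel_measurable_continuous_on_if[OF Tb cont]) simp
  have gm: "g \<in> borel_measurable borel"
  proof (rule borel_measurable_LIMSEQ_metric[OF hm])
    fix a :: "nat \<Rightarrow> real"
    show "(\<lambda>i. h i a) \<longlonglongrightarrow> g a"
    proof (cases "a \<in> S")
      case True
      then obtain n0 where "a \<in> T n0" by (auto simp: S_def)
      then have "\<forall>n\<ge>n0. h n a = g a" using Tmono True by (auto simp: h_def g_def)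
      then show ?thesis
        by (intro tendsto_eventually) (auto simp: eventually_sequentially)
    next
      case False
      then have "\<forall>n. h n a = g a" by (auto simp: h_def g_def S_def)
      then show ?thesis by simp
    qed
  qed
  have "g \<in> seqspace \<rightarrow>\<^sub>M seqspace"
    using gm measurable_cong_sets[OF sets_seqspace sets_seqspace] by blast
  moreover have "S \<in> sets seqspace" unfolding S_def sets_seqspace using Tb by blast
  moreover have "\<forall>a\<in>S. g a = dec_inv H a" by (simp add: g_def)
  moreover have "AE \<omega> in M. Phi H (NP \<omega>) \<in> S"
    using AEU
  proof eventually_elim
    case (elim \<omega>)
    then obtain n where "pr \<omega> \<in> L n" by (auto simp: U_def)
    then have "pr \<omega> \<in> L' n" by (auto simp: L'_def)
    then have "fst (pr \<omega>) \<in> T n" by (auto simp: T_def)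
    then show ?case by (auto simp: S_def pr_def)
  qed
  ultimately show ?thesis using that by blast
qed



lemma vimage_subalg:
  assumes "A \<in> M \<rightarrow>\<^sub>M N"
  shows "subalgebra M (vimage_algebra (space M) A N)"
  unfolding subalgebra_def using sets_image_in_sets[OF refl assms] by simp

lemma fms_vimage:
  assumes "prob_space M" "A \<in> M \<rightarrow>\<^sub>M N"
  shows "finite_measure_subalgebra M (vimage_algebra (space M) A N)"
proof -
  interpret prob_space M by fact
  show ?thesis
    by (simp add: finite_measure_subalgebra_def finite_measure_subalgebra_axioms_def
        finite_measure_axioms vimage_subalg[OF assms(2)])
qed

lemma trans_int:
  fixes Z1 Z2 :: "'a \<Rightarrow> real" and A1 A2 :: "'a \<Rightarrow> nat \<Rightarrow> real"
  assumes [measurable]: "Z1 \<in> borel_measurable M" "Z2 \<in> borel_measurable M"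
    "A1 \<in> M \<rightarrow>\<^sub>M seqspace" "A2 \<in> M \<rightarrow>\<^sub>M seqspace"
    and law: "distr M (borel \<Otimes>\<^sub>M seqspace) (\<lambda>\<omega>. (Z1 \<omega>, A1 \<omega>)) = distr M (borel \<Otimes>\<^sub>M seqspace) (\<lambda>\<omega>. (Z2 \<omega>, A2 \<omega>))"
    and phi[measurable]: "(\<phi> :: real \<times> (nat \<Rightarrow> real) \<Rightarrow> real) \<in> borel_measurable (borel \<Otimes>\<^sub>M seqspace)"
  shows "(\<integral>\<omega>. \<phi> (Z1 \<omega>, A1 \<omega>) \<partial>M) = (\<integral>\<omega>. \<phi> (Z2 \<omega>, A2 \<omega>) \<partial>M)"
proof -
  have "(\<integral>\<omega>. \<phi> (Z1 \<omega>, A1 \<omega>) \<partial>M) = integral\<^sup>L (distr M (borel \<Otimes>\<^sub>M seqspace) (\<lambda>\<omega>. (Z1 \<omega>, A1 \<omega>))) \<phi>"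
    by (rule integral_distr[symmetric]) measurable
  also have "\<dots> = integral\<^sup>L (distr M (borel \<Otimes>\<^sub>M seqspace) (\<lambda>\<omega>. (Z2 \<omega>, A2 \<omega>))) \<phi>" by (simp add: law)
  also have "\<dots> = (\<integral>\<omega>. \<phi> (Z2 \<omega>, A2 \<omega>) \<partial>M)"
    by (rule integral_distr) measurable
  finally show ?thesis .
qed

lemma trans_integrable:
  fixes Z1 Z2 :: "'a \<Rightarrow> real" and A1 A2 :: "'a \<Rightarrow> nat \<Rightarrow> real"
  assumes [measurable]: "Z1 \<in> borel_measurable M" "Z2 \<in> borel_measurable M"
    "A1 \<in> M \<rightarrow>\<^sub>M seqspace" "A2 \<in> M \<rightarrow>\<^sub>M seqspace"
    and law: "distr M (borel \<Otimes>\<^sub>M seqspace) (\<lambda>\<omega>. (Z1 \<omega>, A1 \<omega>)) = distr M (borel \<Otimes>\<^sub>M seqspace) (\<lambda>\<omega>. (Z2 \<omega>, A2 \<omega>))"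
    and phi[measurable]: "(\<phi> :: real \<times> (nat \<Rightarrow> real) \<Rightarrow> real) \<in> borel_measurable (borel \<Otimes>\<^sub>M seqspace)"
    and int: "integrable M (\<lambda>\<omega>. \<phi> (Z1 \<omega>, A1 \<omega>))"
  shows "integrable M (\<lambda>\<omega>. \<phi> (Z2 \<omega>, A2 \<omega>))"
proof -
  have "integrable (distr M (borel \<Otimes>\<^sub>M seqspace) (\<lambda>\<omega>. (Z1 \<omega>, A1 \<omega>))) \<phi>"
    using int by (subst integrable_distr_eq) measurable
  then have "integrable (distr M (borel \<Otimes>\<^sub>M seqspace) (\<lambda>\<omega>. (Z2 \<omega>, A2 \<omega>))) \<phi>" by (simp add: law)
  then show ?thesis by (subst (asm) integrable_distr_eq) measurable
qed

lemma ce_transfer: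
  fixes Z1 Z2 :: "'a \<Rightarrow> real" and A1 A2 :: "'a \<Rightarrow> nat \<Rightarrow> real"
  assumes P: "prob_space M"
    and [measurable]: "Z1 \<in> borel_measurable M" "Z2 \<in> borel_measurable M"
    "A1 \<in> M \<rightarrow>\<^sub>M seqspace" "A2 \<in> M \<rightarrow>\<^sub>M seqspace"
    and law: "distr M (borel \<Otimes>\<^sub>M seqspace) (\<lambda>\<omega>. (Z1 \<omega>, A1 \<omega>)) = distr M (borel \<Otimes>\<^sub>M seqspace) (\<lambda>\<omega>. (Z2 \<omega>, A2 \<omega>))"
    and f[measurable]: "f \<in> borel_measurable seqspace"
    and ae: "AE \<omega> in M. f (A1 \<omega>) = real_cond_exp M (vimage_algebra (space M) A1 seqspace) (indicator {\<omega>\<in>space M. Z1 \<omega> \<le> r}) \<omega>"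
  shows "AE \<omega> in M. real_cond_exp M (vimage_algebra (space M) A2 seqspace) (indicator {\<omega>\<in>space M. Z2 \<omega> \<le> r}) \<omega> = f (A2 \<omega>)"
proof -
  interpret prob_space M by (rule P)
  let ?V1 = "vimage_algebra (space M) A1 seqspace"
  let ?V2 = "vimage_algebra (space M) A2 seqspace"
  interpret C1: finite_measure_subalgebra M ?V1 by (rule fms_vimage) (fact, measurable)
  interpret C2: finite_measure_subalgebra M ?V2 by (rule fms_vimage) (fact, measurable)
  let ?I1 = "indicator {\<omega>\<in>space M. Z1 \<omega> \<le> r} :: 'a \<Rightarrow> real"
  let ?I2 = "indicator {\<omega>\<in>space M. Z2 \<omega> \<le> r} :: 'a \<Rightarrow> real"
  have [measurable]: "{\<omega>\<in>space M. Z1 \<omega> \<le> r} \<in> sets M" "{\<omega>\<in>space M. Z2 \<omega> \<le> r} \<in> sets M" by measurable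
  have iI1: "integrable M ?I1" by (intro integrable_real_indicator) (auto simp: less_top[symmetric])
  have iI2: "integrable M ?I2" by (intro integrable_real_indicator) (auto simp: less_top[symmetric])
  have iCE1: "integrable M (real_cond_exp M ?V1 ?I1)" by (rule C1.real_cond_exp_int(1)[OF iI1])
  have "integrable M (\<lambda>\<omega>. f (A1 \<omega>)) = integrable M (real_cond_exp M ?V1 ?I1)"
    by (rule integrable_cong_AE) (use ae in \<open>auto simp: borel_measurable_cond_exp2\<close>)
  then have if1: "integrable M (\<lambda>\<omega>. f (A1 \<omega>))" using iCE1 by simp
  have if2: "integrable M (\<lambda>\<omega>. f (A2 \<omega>))"
    using trans_integrable[OF assms(2-6), of "\<lambda>p. f (snd p)"] if1 by simp
  show ?thesis
  proof (rule C2.real_cond_exp_charact)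
    fix A assume "A \<in> sets ?V2"
    then obtain C where C[measurable]: "C \<in> sets seqspace" and A: "A = A2 -` C \<inter> space M"
      by (subst (asm) sets_vimage_algebra2) auto
    define A' where "A' = A1 -` C \<inter> space M"
    have A'V: "A' \<in> sets ?V1" unfolding A'_def by (rule in_vimage_algebra[OF C])
    have [measurable]: "A' \<in> sets M" unfolding A'_def by measurable
    have "(\<integral>\<omega>\<in>A. ?I2 \<omega> \<partial>M) = (\<integral>\<omega>. indicator C (A2 \<omega>) * indicator {..r} (Z2 \<omega>) \<partial>M)"
      unfolding set_lebesgue_integral_def A by (intro Bochner_Integration.integral_cong) (auto simp: indicator_def)
    also have "\<dots> = (\<integral>\<omega>. indicator C (A1 \<omega>) * indicator {..r} (Z1 \<omega>) \<partial>M)"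
      using trans_int[OF assms(2-6), of "\<lambda>p. indicator C (snd p) * indicator {..r} (fst p)"] by simp
    also have "\<dots> = (\<integral>\<omega>\<in>A'. ?I1 \<omega> \<partial>M)"
      unfolding set_lebesgue_integral_def A'_def by (intro Bochner_Integration.integral_cong) (auto simp: indicator_def)
    also have "\<dots> = (\<integral>\<omega>\<in>A'. real_cond_exp M ?V1 ?I1 \<omega> \<partial>M)"
      by (rule C1.real_cond_exp_intA[OF iI1 A'V])
    also have "\<dots> = (\<integral>\<omega>. indicator C (A1 \<omega>) * f (A1 \<omega>) \<partial>M)"
      unfolding set_lebesgue_integral_def
      by (rule integral_cong_AE) (use ae AE_space in \<open>auto simp: A'_def indicator_def borel_measurable_cond_exp2\<close>)
    also have "\<dots> = (\<integral>\<omega>. indicator C (A2 \<omega>) * f (A2 \<omega>) \<partial>M)"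
      using trans_int[OF assms(2-6), of "\<lambda>p. indicator C (snd p) * f (snd p)"] by simp
    also have "\<dots> = (\<integral>\<omega>\<in>A. f (A2 \<omega>) \<partial>M)"
      unfolding set_lebesgue_integral_def A by (intro Bochner_Integration.integral_cong) (auto simp: indicator_def)
    finally show "(\<integral>\<omega>\<in>A. ?I2 \<omega> \<partial>M) = (\<integral>\<omega>\<in>A. f (A2 \<omega>) \<partial>M)" .
  next
    show "integrable M ?I2" by (rule iI2)
    show "integrable M (\<lambda>\<omega>. f (A2 \<omega>))" by (rule if2)
    show "(\<lambda>\<omega>. f (A2 \<omega>)) \<in> borel_measurable ?V2"
      by (rule measurable_compose[OF measurable_vimage_algebra1 f]) simp
  qed
qed



lemma fdd_law:
  fixes z w :: "int \<Rightarrow> 'a \<Rightarrow> real"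
  assumes P: "prob_space M" and zm: "\<And>s. z s \<in> borel_measurable M" and wm: "\<And>s. w s \<in> borel_measurable M"
    and fdd: "same_fdd M z w"
  shows "distr M (PiM UNIV (\<lambda>_. borel)) (\<lambda>\<omega> j. z j \<omega>) = distr M (PiM UNIV (\<lambda>_. borel)) (\<lambda>\<omega> j. w j \<omega>)"
proof -
  interpret prob_space M by (rule P)
  have mz: "(\<lambda>\<omega> j. z j \<omega>) \<in> M \<rightarrow>\<^sub>M PiM UNIV (\<lambda>_. borel)"
    by (intro measurable_PiM_single') (auto simp: zm)
  have mw: "(\<lambda>\<omega> j. w j \<omega>) \<in> M \<rightarrow>\<^sub>M PiM UNIV (\<lambda>_. borel)"
    by (intro measurable_PiM_single') (auto simp: wm)
  have mzJ: "(\<lambda>\<omega>. restrict (\<lambda>j. z j \<omega>) J) \<in> M \<rightarrow>\<^sub>M PiM J (\<lambda>_. borel)" for J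
    by (intro measurable_restrict) (auto simp: zm)
  have mwJ: "(\<lambda>\<omega>. restrict (\<lambda>j. w j \<omega>) J) \<in> M \<rightarrow>\<^sub>M PiM J (\<lambda>_. borel)" for J
    by (intro measurable_restrict) (auto simp: wm)
  show ?thesis
  proof (rule measure_eqI_PiM_infinite)
    show "sets (distr M (PiM UNIV (\<lambda>_. borel)) (\<lambda>\<omega> j. z j \<omega>)) = sets (PiM UNIV (\<lambda>_. borel))" by simp
    show "sets (distr M (PiM UNIV (\<lambda>_. borel)) (\<lambda>\<omega> j. w j \<omega>)) = sets (PiM UNIV (\<lambda>_. borel))" by simp
    show "finite_measure (distr M (PiM UNIV (\<lambda>_. borel)) (\<lambda>\<omega> j. z j \<omega>))"
      using prob_space_distr[OF mz] by (rule prob_space.finite_measure)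
  next
    fix A :: "int \<Rightarrow> real set" and J :: "int set"
    assume J: "finite J" "J \<subseteq> UNIV" and A: "\<And>i. i \<in> J \<Longrightarrow> A i \<in> sets borel"
    have E: "prod_emb UNIV (\<lambda>_. borel) J (Pi\<^sub>E J A) \<in> sets (PiM UNIV (\<lambda>_. borel))"
      using sets_PiM_I[of J UNIV A "\<lambda>_. borel"] J A by auto
    have EJ: "Pi\<^sub>E J A \<in> sets (PiM J (\<lambda>_. borel))" using J A by (intro sets_PiM_I_finite) auto
    have pre: "(\<lambda>\<omega> j. v j \<omega>) -` prod_emb UNIV (\<lambda>_. borel) J (Pi\<^sub>E J A) \<inter> space M
        = (\<lambda>\<omega>. restrict (\<lambda>j. v j \<omega>) J) -` Pi\<^sub>E J A \<inter> space M" for v :: "int \<Rightarrow> 'a \<Rightarrow> real"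
      by (auto simp: prod_emb_def)
    have "distr M (PiM J (\<lambda>_. borel)) (\<lambda>\<omega>. restrict (\<lambda>j. z j \<omega>) J) =
          distr M (PiM J (\<lambda>_. borel)) (\<lambda>\<omega>. restrict (\<lambda>j. w j \<omega>) J)"
      using fdd J unfolding same_fdd_def by blast
    then have "emeasure (distr M (PiM J (\<lambda>_. borel)) (\<lambda>\<omega>. restrict (\<lambda>j. z j \<omega>) J)) (Pi\<^sub>E J A) =
          emeasure (distr M (PiM J (\<lambda>_. borel)) (\<lambda>\<omega>. restrict (\<lambda>j. w j \<omega>) J)) (Pi\<^sub>E J A)" by simp
    then show "emeasure (distr M (PiM UNIV (\<lambda>_. borel)) (\<lambda>\<omega> j. z j \<omega>)) (prod_emb UNIV (\<lambda>_. borel) J (Pi\<^sub>E J A)) =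
          emeasure (distr M (PiM UNIV (\<lambda>_. borel)) (\<lambda>\<omega> j. w j \<omega>)) (prod_emb UNIV (\<lambda>_. borel) J (Pi\<^sub>E J A))"
      by (simp add: emeasure_distr[OF mz E] emeasure_distr[OF mw E] emeasure_distr[OF mzJ EJ]
          emeasure_distr[OF mwJ EJ] pre)
  qed
qed

lemma pair_law:
  fixes z w :: "int \<Rightarrow> 'a \<Rightarrow> real"
  assumes P: "prob_space M" and zm: "\<And>s. z s \<in> borel_measurable M" and wm: "\<And>s. w s \<in> borel_measurable M"
    and fdd: "same_fdd M z w"
  shows "distr M (borel \<Otimes>\<^sub>M seqspace) (\<lambda>\<omega>. (z t \<omega>, past z t \<omega>)) =
         distr M (borel \<Otimes>\<^sub>M seqspace) (\<lambda>\<omega>. (w t \<omega>, past w t \<omega>))"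
proof -
  define \<psi> where "\<psi> f = (f t, \<lambda>k. f (t - 1 - int k))" for f :: "int \<Rightarrow> real"
  have m\<psi>: "\<psi> \<in> PiM UNIV (\<lambda>_. borel) \<rightarrow>\<^sub>M borel \<Otimes>\<^sub>M seqspace"
    unfolding \<psi>_def seqspace_def
    by (intro measurable_Pair measurable_PiM_single') (auto intro: measurable_component_singleton)
  have mz: "(\<lambda>\<omega> j. z j \<omega>) \<in> M \<rightarrow>\<^sub>M PiM UNIV (\<lambda>_. borel)"
    by (intro measurable_PiM_single') (auto simp: zm)
  have mw: "(\<lambda>\<omega> j. w j \<omega>) \<in> M \<rightarrow>\<^sub>M PiM UNIV (\<lambda>_. borel)"
    by (intro measurable_PiM_single') (auto simp: wm)
  have "distr M (borel \<Otimes>\<^sub>M seqspace) (\<lambda>\<omega>. (z t \<omega>, past z t \<omega>)) =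
     distr (distr M (PiM UNIV (\<lambda>_. borel)) (\<lambda>\<omega> j. z j \<omega>)) (borel \<Otimes>\<^sub>M seqspace) \<psi>"
    by (subst distr_distr[OF m\<psi> mz]) (simp add: comp_def \<psi>_def past_def)
  also have "\<dots> = distr (distr M (PiM UNIV (\<lambda>_. borel)) (\<lambda>\<omega> j. w j \<omega>)) (borel \<Otimes>\<^sub>M seqspace) \<psi>"
    using fdd_law[OF P zm wm fdd] by simp
  also have "\<dots> = distr M (borel \<Otimes>\<^sub>M seqspace) (\<lambda>\<omega>. (w t \<omega>, past w t \<omega>))"
    by (subst distr_distr[OF m\<psi> mw]) (simp add: comp_def \<psi>_def past_def)
  finally show ?thesis .
qed



lemma meas_section:
  assumes "(\<lambda>(r, a). Fc r a) \<in> borel_measurable (borel \<Otimes>\<^sub>M N)"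
  shows "Fc r \<in> borel_measurable N"
proof -
  have "(\<lambda>a. (\<lambda>(r, a). Fc r a) (r, a)) \<in> borel_measurable N"
    by (rule measurable_compose[OF measurable_Pair1' assms]) simp
  then show ?thesis by simp
qed

theorem theorem2:
  fixes M :: "'a measure" and x nu :: "int \<Rightarrow> 'a \<Rightarrow> real"
    and G H :: "(nat \<Rightarrow> real) \<Rightarrow> real" and t :: int
    and F Fhat :: "real \<Rightarrow> (nat \<Rightarrow> real) \<Rightarrow> real"
  assumes "prob_space M"
    and "\<forall>s. x s \<in> borel_measurable M"
    and "stationary M x"
    and "G \<in> borel_measurable seqspace"
    and "H \<in> borel_measurable seqspace"
    and "\<forall>s. \<forall>\<omega>\<in>space M. nu s \<omega> = G (hist x s \<omega>)"
    and "prob_space.indep_vars M (\<lambda>_. borel) nu UNIV"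
    and "\<forall>s. distr M borel (nu s) = uniform_measure lborel {0..1}"
    and "same_fdd M (\<lambda>s \<omega>. H (hist nu s \<omega>)) x"
    and "inj_on H {b. \<forall>k. b k \<in> {0..1}}"
    and "cond_cdf M x x t F"
    and "cond_cdf M (\<lambda>s \<omega>. H (hist nu s \<omega>)) nu t Fhat"
  shows "AE a in distr M seqspace (past x t).
           AE r in lborel. F r a = Fhat r (dec_inv H a)"
proof -
  note P = assms(1)
  interpret prob_space M by (rule P)
  have Hm[measurable]: "H \<in> borel_measurable seqspace" by (rule assms(5))
  have inj: "inj_on H KK" using assms(10) by (simp add: KK_def)
  have xm[measurable]: "x s \<in> borel_measurable M" for s using assms(2) by blast
  have num[measurable]: "nu s \<in> borel_measurable M" for s
    using assms(7) unfolding indep_vars_def by blast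
  define Xh where "Xh = (\<lambda>s \<omega>. H (hist nu s \<omega>))"
  have histm[measurable]: "hist nu s \<in> M \<rightarrow>\<^sub>M seqspace" for s
    unfolding hist_def seqspace_def by (intro measurable_PiM_single') auto
  have Xhm[measurable]: "Xh s \<in> borel_measurable M" for s
    unfolding Xh_def by measurable
  have pastm[measurable]: "past z t \<in> M \<rightarrow>\<^sub>M seqspace" if "\<And>s. z s \<in> borel_measurable M" for z
    unfolding past_def seqspace_def using that by (intro measurable_PiM_single') auto
  define XP where "XP = past x t"
  define NP where "NP = past nu t"
  define HP where "HP = past Xh t"
  have XPm[measurable]: "XP \<in> M \<rightarrow>\<^sub>M seqspace" unfolding XP_def by (rule pastm) simp
  have NPm[measurable]: "NP \<in> M \<rightarrow>\<^sub>M seqspace" unfolding NP_def by (rule pastm) simp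
  have HPm[measurable]: "HP \<in> M \<rightarrow>\<^sub>M seqspace" unfolding HP_def by (rule pastm) simp
  have HP_Phi: "HP \<omega> = Phi H (NP \<omega>)" for \<omega>
    by (simp add: HP_def NP_def Xh_def past_def hist_def Phi_def fun_eq_iff algebra_simps)
  have AEK: "AE \<omega> in M. NP \<omega> \<in> KK"
  proof -
    have "AE \<omega> in M. nu s \<omega> \<in> {0..1}" for s
    proof -
      have "AE y in uniform_measure lborel {0..1::real}. y \<in> {0..1}"
        by (rule AE_uniform_measureI) auto
      moreover have "distr M borel (nu s) = uniform_measure lborel {0..1}" using assms(8) by blast
      ultimately have "AE y in distr M borel (nu s). y \<in> {0..1}" by (simp only:)
      then show ?thesis by (subst (asm) AE_distr_iff) auto
    qed
    then have "\<forall>k. AE \<omega> in M. nu (t - 1 - int k) \<omega> \<in> {0..1}" by blast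
    then have "AE \<omega> in M. \<forall>k. nu (t - 1 - int k) \<omega> \<in> {0..1}" by (subst AE_all_countable)
    then show ?thesis by eventually_elim (simp add: NP_def past_def KK_def)
  qed
  obtain g S where gm[measurable]: "g \<in> seqspace \<rightarrow>\<^sub>M seqspace" and Sm[measurable]: "S \<in> sets seqspace"
    and gS: "\<forall>a\<in>S. g a = dec_inv H a" and AES: "AE \<omega> in M. Phi H (NP \<omega>) \<in> S"
    using exists_inverse[OF P NPm Hm inj AEK] by blast
  have AEg: "AE \<omega> in M. NP \<omega> = g (HP \<omega>)"
    using AES AEK by eventually_elim (simp add: HP_Phi gS dec_inv_Phi[OF inj])
  have law: "distr M (borel \<Otimes>\<^sub>M seqspace) (\<lambda>\<omega>. (x t \<omega>, XP \<omega>)) =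
             distr M (borel \<Otimes>\<^sub>M seqspace) (\<lambda>\<omega>. (Xh t \<omega>, HP \<omega>))"
    using pair_law[where t=t, OF P Xhm xm assms(9)[folded Xh_def]] unfolding XP_def HP_def
    by simp

  have Fm[measurable]: "F r \<in> borel_measurable seqspace" for r
    using assms(11) meas_section unfolding cond_cdf_def by blast
  have Fhm[measurable]: "Fhat r \<in> borel_measurable seqspace" for r
    using assms(12) meas_section unfolding cond_cdf_def by blast
  have key: "AE \<omega> in M. F r (HP \<omega>) = Fhat r (g (HP \<omega>))" for r
  proof -
    let ?VH = "vimage_algebra (space M) HP seqspace"
    let ?VN = "vimage_algebra (space M) NP seqspace"
    let ?Y = "indicator {\<omega>\<in>space M. Xh t \<omega> \<le> r} :: 'a \<Rightarrow> real"
    have ae1: "AE \<omega> in M. F r (XP \<omega>) = real_cond_exp M (vimage_algebra (space M) XP seqspace) (indicator {\<omega>\<in>space M. x t \<omega> \<le> r}) \<omega>"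
      using assms(11) unfolding cond_cdf_def XP_def by simp
    have A: "AE \<omega> in M. real_cond_exp M ?VH ?Y \<omega> = F r (HP \<omega>)"
      by (rule ce_transfer[OF P xm Xhm XPm HPm law Fm ae1])
    have ae2: "AE \<omega> in M. Fhat r (NP \<omega>) = real_cond_exp M ?VN ?Y \<omega>"
      using assms(12) unfolding cond_cdf_def NP_def Xh_def by simp
    interpret CH: finite_measure_subalgebra M ?VH by (rule fms_vimage[OF P HPm])
    interpret CN: finite_measure_subalgebra M ?VN by (rule fms_vimage[OF P NPm])
    have [measurable]: "{\<omega>\<in>space M. Xh t \<omega> \<le> r} \<in> sets M" by measurable
    have iY: "integrable M ?Y" by (intro integrable_real_indicator) (auto simp: less_top[symmetric])
    have ae3: "AE \<omega> in M. Fhat r (g (HP \<omega>)) = real_cond_exp M ?VN ?Y \<omega>"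
      using ae2 AEg by eventually_elim simp
    have "integrable M (\<lambda>\<omega>. Fhat r (g (HP \<omega>))) = integrable M (real_cond_exp M ?VN ?Y)"
      by (rule integrable_cong_AE) (use ae3 in \<open>auto simp: borel_measurable_cond_exp2\<close>)
    then have iG: "integrable M (\<lambda>\<omega>. Fhat r (g (HP \<omega>)))"
      using CN.real_cond_exp_int(1)[OF iY] by simp
    have B: "AE \<omega> in M. real_cond_exp M ?VH ?Y \<omega> = Fhat r (g (HP \<omega>))"
    proof (rule CH.real_cond_exp_charact)
      fix A assume "A \<in> sets ?VH"
      then obtain C where C[measurable]: "C \<in> sets seqspace" and Aeq: "A = HP -` C \<inter> space M"
        by (subst (asm) sets_vimage_algebra2) auto
      have [measurable]: "A \<in> sets M" unfolding Aeq by measurable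
      have "Phi H -` C \<in> sets seqspace" using measurable_sets[OF measurable_Phi[OF Hm] C] by simp
      then have AN: "A \<in> sets ?VN"
        using in_vimage_algebra[of "Phi H -` C" seqspace NP "space M"] by (simp add: Aeq HP_Phi vimage_def)
      have "(\<integral>\<omega>\<in>A. ?Y \<omega> \<partial>M) = (\<integral>\<omega>\<in>A. real_cond_exp M ?VN ?Y \<omega> \<partial>M)"
        by (rule CN.real_cond_exp_intA[OF iY AN])
      also have "\<dots> = (\<integral>\<omega>\<in>A. Fhat r (g (HP \<omega>)) \<partial>M)"
        unfolding set_lebesgue_integral_def
        by (rule integral_cong_AE) (use ae3 in \<open>auto simp: borel_measurable_cond_exp2\<close>)
      finally show "(\<integral>\<omega>\<in>A. ?Y \<omega> \<partial>M) = (\<integral>\<omega>\<in>A. Fhat r (g (HP \<omega>)) \<partial>M)" .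
    next
      show "integrable M ?Y" by (rule iY)
      show "integrable M (\<lambda>\<omega>. Fhat r (g (HP \<omega>)))" by (rule iG)
      have "(\<lambda>a. Fhat r (g a)) \<in> borel_measurable seqspace" by measurable
      then show "(\<lambda>\<omega>. Fhat r (g (HP \<omega>))) \<in> borel_measurable ?VH"
        by (rule measurable_compose[OF measurable_vimage_algebra1, rotated]) simp
    qed
    show ?thesis using A B by eventually_elim simp
  qed
  have muH: "distr M seqspace XP = distr M seqspace HP"
  proof -
    have "distr M seqspace XP = distr (distr M (borel \<Otimes>\<^sub>M seqspace) (\<lambda>\<omega>. (x t \<omega>, XP \<omega>))) seqspace snd"
      by (subst distr_distr) (auto simp: comp_def)
    also have "\<dots> = distr (distr M (borel \<Otimes>\<^sub>M seqspace) (\<lambda>\<omega>. (Xh t \<omega>, HP \<omega>))) seqspace snd"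
      by (simp only: law)
    also have "\<dots> = distr M seqspace HP"
      by (subst distr_distr) (auto simp: comp_def)
    finally show ?thesis .
  qed
  define \<mu> where "\<mu> = distr M seqspace XP"
  have P\<mu>: "AE a in \<mu>. a \<in> S \<longrightarrow> F r a = Fhat r (g a)" for r
  proof -
    have fg: "(\<lambda>a. Fhat r (g a)) \<in> borel_measurable seqspace" by measurable
    have "{a \<in> space seqspace. a \<in> S \<longrightarrow> F r a = Fhat r (g a)} =
      (space seqspace - S) \<union> {a \<in> space seqspace. F r a = Fhat r (g a)}" by auto
    also have "\<dots> \<in> sets seqspace" using measurable_equality_set[OF Fm fg] Sm by blast
    finally have Sr: "{a \<in> space seqspace. a \<in> S \<longrightarrow> F r a = Fhat r (g a)} \<in> sets seqspace" .
    have "AE \<omega> in M. HP \<omega> \<in> S \<longrightarrow> F r (HP \<omega>) = Fhat r (g (HP \<omega>))"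
      using key[of r] by eventually_elim simp
    then show ?thesis unfolding \<mu>_def muH using AE_distr_iff[OF HPm Sr] by simp
  qed
  have AES\<mu>: "AE a in \<mu>. a \<in> S"
  proof -
    have "AE \<omega> in M. HP \<omega> \<in> S" using AES by (simp add: HP_Phi)
    then show ?thesis unfolding \<mu>_def muH by (subst AE_distr_iff) auto
  qed
  have s\<mu>: "sets \<mu> = sets seqspace" by (simp add: \<mu>_def)
  interpret \<mu>P: prob_space \<mu> unfolding \<mu>_def by (rule prob_space_distr[OF XPm])
  interpret PS: pair_sigma_finite lborel \<mu>
    by (simp add: pair_sigma_finite_def sigma_finite_lborel \<mu>P.sigma_finite_measure_axioms)
  have sprod: "sets (lborel \<Otimes>\<^sub>M \<mu>) = sets (borel \<Otimes>\<^sub>M seqspace)"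
    by (rule sets_pair_measure_cong) (simp_all add: s\<mu>)
  have m1[measurable]: "(\<lambda>p. F (fst p) (snd p)) \<in> borel_measurable (borel \<Otimes>\<^sub>M seqspace)"
  proof -
    have "(\<lambda>(r, a). F r a) = (\<lambda>p. F (fst p) (snd p))" by (rule ext) (simp add: split_beta)
    then show ?thesis using assms(11) unfolding cond_cdf_def by simp
  qed
  have m2[measurable]: "(\<lambda>p. Fhat (fst p) (g (snd p))) \<in> borel_measurable (borel \<Otimes>\<^sub>M seqspace)"
  proof -
    have j: "(\<lambda>(r, a). Fhat r a) \<in> borel_measurable (borel \<Otimes>\<^sub>M seqspace)"
      using assms(12) unfolding cond_cdf_def by simp
    have "(\<lambda>p. (fst p, g (snd p))) \<in> (borel \<Otimes>\<^sub>M seqspace) \<rightarrow>\<^sub>M (borel \<Otimes>\<^sub>M seqspace)" by measurable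
    from measurable_compose[OF this j] show ?thesis by (simp add: split_beta)
  qed
  have Qset: "{p \<in> space (lborel \<Otimes>\<^sub>M \<mu>). snd p \<in> S \<longrightarrow> F (fst p) (snd p) = Fhat (fst p) (g (snd p))}
      \<in> sets (lborel \<Otimes>\<^sub>M \<mu>)"
  proof -
    have "{p \<in> space (borel \<Otimes>\<^sub>M seqspace). snd p \<in> S \<longrightarrow> F (fst p) (snd p) = Fhat (fst p) (g (snd p))}
      \<in> sets (borel \<Otimes>\<^sub>M seqspace)" by measurable
    then show ?thesis unfolding sets_eq_imp_space_eq[OF sprod] sprod .
  qed
  have "AE r in lborel. AE a in \<mu>. a \<in> S \<longrightarrow> F r a = Fhat r (g a)"
    by (intro AE_I2 P\<mu>)
  then have "AE a in \<mu>. AE r in lborel. a \<in> S \<longrightarrow> F r a = Fhat r (g a)"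
    using PS.AE_commute[where P="\<lambda>r a. a \<in> S \<longrightarrow> F r a = Fhat r (g a)"] Qset by simp
  then have "AE a in \<mu>. AE r in lborel. F r a = Fhat r (dec_inv H a)"
    using AES\<mu>
  proof eventually_elim
    case (elim a)
    then have "AE r in lborel. F r a = Fhat r (g a)" by simp
    then show ?case using gS elim(2) by simp
  qed
  then show ?thesis unfolding \<mu>_def XP_def .
qed
end
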